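(* Let $a_n$ be the number of well-labelled Motzkin paths of size $n$ (with $a_0=a_1=0$) and $A(z)=\sum_{n\ge0}\frac{a_n}{n!}z^n$. Then $$A(z)=\frac{z^2}{2}+zA(z)+\frac{A(z)^2}{2}.$$
   Context: A well-labelled path of size $n$ is a pair $(\mathbf{p},\sigma)$ where $\mathbf{p}=p_1\ldots p_{n-1}$ is a word on $\{-1,0,+1\}$ and $\sigma$ is a permutation of $[n]$ such that $p_i=-1$ implies $\sigma_i<\sigma_{i+1}$ and $p_i=1$ implies $\sigma_i>\sigma_{i+1}$. It is Motzkin if $\sum_{i=1}^j p_i\ge0$ for all $j=1,\ldots,n-2$ and $\sum_{i=1}^{n-1}p_i=-1$. *)

theory Defs
  imports Complex_Main "HOL-Computational_Algebra.Formal_Power_Series"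
begin

text \<open>A well-labelled path of size n: a word p = p_1 ... p_{n-1} over {-1,0,1}
  (stored 0-based as a list of length n-1) and a permutation sigma of [n]
  (stored as the list sigma_1 ... sigma_n, i.e. a distinct list with element set {1..n}).\<close>
definition well_labelled_path :: "nat \<Rightarrow> int list \<Rightarrow> nat list \<Rightarrow> bool" where
  "well_labelled_path n p \<sigma> \<longleftrightarrow>
     length p = n - 1 \<and> set p \<subseteq> {-1, 0, 1} \<and>
     length \<sigma> = n \<and> distinct \<sigma> \<and> set \<sigma> = {1..n} \<and>
     (\<forall>i < n - 1. p ! i = -1 \<longrightarrow> \<sigma> ! i < \<sigma> ! (i + 1)) \<and>
     (\<forall>i < n - 1. p ! i = 1 \<longrightarrow> \<sigma> ! i > \<sigma> ! (i + 1))"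

definition motzkin_word :: "nat \<Rightarrow> int list \<Rightarrow> bool" where
  "motzkin_word n p \<longleftrightarrow>
     (\<forall>j \<in> {1..n-2}. sum_list (take j p) \<ge> 0) \<and> sum_list p = -1"

definition wl_motzkin_path :: "nat \<Rightarrow> int list \<Rightarrow> nat list \<Rightarrow> bool" where
  "wl_motzkin_path n p \<sigma> \<longleftrightarrow> well_labelled_path n p \<sigma> \<and> motzkin_word n p"

text \<open>a_n; with the convention a_0 = a_1 = 0 (which the definition also yields automatically).\<close>
definition num_wl_motzkin :: "nat \<Rightarrow> nat" where
  "num_wl_motzkin n = (if n < 2 then 0 else card {(p, \<sigma>). wl_motzkin_path n p \<sigma>})"

definition A_egf :: "real fps" where
  "A_egf = Abs_fps (\<lambda>n. real (num_wl_motzkin n) / fact n)"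

end

theory Submission
  imports Defs
begin


fun ok :: "int \<Rightarrow> int list \<Rightarrow> bool" where
  "ok h [] = True"
| "ok h (s # X) = (s \<in> {-1,0,1} \<and> 0 \<le> h + s \<and> ok (h + s) X)"

fun cmp :: "int list \<Rightarrow> nat list \<Rightarrow> bool" where
  "cmp [] [x] = True"
| "cmp (s # p) (x # y # t) = (s \<in> {-1,0,1} \<and> (s = -1 \<longrightarrow> x < y) \<and> (s = 1 \<longrightarrow> y < x) \<and> cmp p (y # t))"
| "cmp _ _ = False"

definition negrev :: "int list \<Rightarrow> int list" where
  "negrev p = rev (map uminus p)"

lemma negrev_Cons[simp]: "negrev (s # p) = negrev p @ [- s]"
  by (simp add: negrev_def)
lemma negrev_Nil[simp]: "negrev [] = []" by (simp add: negrev_def)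
lemma negrev_append[simp]: "negrev (p @ q) = negrev q @ negrev p" by (simp add: negrev_def)
lemma negrev_negrev[simp]: "negrev (negrev p) = p" by (simp add: negrev_def rev_map)
lemma sum_negrev[simp]: "sum_list (negrev p) = - sum_list p"
  by (induct p) auto
lemma length_negrev[simp]: "length (negrev p) = length p" by (simp add: negrev_def)

lemma ok_append[simp]: "ok h (X @ Y) = (ok h X \<and> ok (h + sum_list X) Y)"
  by (induct X arbitrary: h) (auto simp: algebra_simps)

lemma ok_mono: "ok h X \<Longrightarrow> h \<le> k \<Longrightarrow> ok k X"
  by (induct X arbitrary: h k) auto

lemma ok_set: "ok h X \<Longrightarrow> set X \<subseteq> {-1,0,1}"
  by (induct X arbitrary: h) auto

lemma ok_negrev: "ok h X \<Longrightarrow> 0 \<le> h \<Longrightarrow> ok (h + sum_list X) (negrev X)"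
proof (induct X arbitrary: h)
  case Nil then show ?case by simp
next
  case (Cons s X)
  then have "ok (h + s + sum_list X) (negrev X)" by auto
  with Cons.prems show ?case by (auto simp: algebra_simps)
qed

lemma first_down:
  "set M \<subseteq> {-1,0,1} \<Longrightarrow> sum_list M < 0 \<Longrightarrow>
   \<exists>A B. M = A @ (-1) # B \<and> ok 0 A \<and> sum_list A = 0"
proof (induct "length M" arbitrary: M rule: less_induct)
  case less
  then obtain s M1 where M: "M = s # M1" by (cases M) auto
  have s: "s \<in> {-1,0,1}" and M1s: "set M1 \<subseteq> {-1,0,1}" using less.prems M by auto
  show ?case
  proof (cases "s = -1")
    case True then show ?thesis using M by (intro exI[of _ "[]"] exI[of _ M1]) auto
  next
    case False
    show ?thesis
    proof (cases "s = 0")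
      case True
      then have "sum_list M1 < 0" using less.prems M by auto
      with less.hyps[of M1] M M1s obtain A B where "M1 = A @ (-1) # B" "ok 0 A" "sum_list A = 0" by auto
      then show ?thesis using M True by (intro exI[of _ "0 # A"] exI[of _ B]) auto
    next
      case False
      with s \<open>s \<noteq> -1\<close> have s1: "s = 1" by auto
      then have "sum_list M1 < 0" using less.prems M by auto
      with less.hyps[of M1] M M1s obtain A1 B1 where AB1: "M1 = A1 @ (-1) # B1" "ok 0 A1" "sum_list A1 = 0" by auto
      have "sum_list B1 < 0" using AB1 less.prems M s1 by auto
      moreover have "set B1 \<subseteq> {-1,0,1}" using M1s AB1 by auto
      moreover have "length B1 < length M" using AB1 M by auto
      ultimately obtain A2 B2 where AB2: "B1 = A2 @ (-1) # B2" "ok 0 A2" "sum_list A2 = 0"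
        using less.hyps by blast
      have "ok 1 A1" using ok_mono[OF AB1(2)] by simp
      then show ?thesis using M s1 AB1 AB2
        by (intro exI[of _ "1 # A1 @ (-1) # A2"] exI[of _ B2]) auto
    qed
  qed
qed

lemma first_down_unique_aux:
  assumes "ok 0 A" "sum_list A = 0" "ok 0 A'" "A @ (-1) # B = A' @ (-1) # B'" "length A < length A'"
  shows False
proof -
  have "A' = take (length A') (A @ (-1) # B)" using assms(4) by (metis append_eq_conv_conj)
  also have "\<dots> = A @ take (length A' - length A) ((-1) # B)" using assms(5) by simp
  also have "\<dots> = A @ (-1) # take (length A' - length A - 1) B"
    using assms(5) by (cases "length A' - length A") auto
  finally have "ok 0 (A @ (-1) # take (length A' - length A - 1) B)" using assms(3) by simp
  then show False using assms by simp
qed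

lemma first_down_unique:
  assumes "ok 0 A" "sum_list A = 0" "ok 0 A'" "sum_list A' = 0" "A @ (-1) # B = A' @ (-1) # B'"
  shows "A = A' \<and> B = B'"
proof -
  have "\<not> length A < length A'" using first_down_unique_aux assms by blast
  moreover have "\<not> length A' < length A" using first_down_unique_aux assms by metis
  ultimately have "length A = length A'" by simp
  then show ?thesis using assms(5) by simp
qed



lemma cmp_length: "cmp p s \<Longrightarrow> length s = length p + 1"
  by (induct p s rule: cmp.induct) auto

lemma cmp_set: "cmp p s \<Longrightarrow> set p \<subseteq> {-1,0,1}"
  by (induct p s rule: cmp.induct) auto

lemma cmp_ne: "cmp p s \<Longrightarrow> s \<noteq> []"
  using cmp_length by fastforce

lemma cmp_Cons: "cmp (c # q) r \<longleftrightarrow> (\<exists>x y t. r = x # y # t \<and> c \<in> {-1,0,1} \<and> (c = -1 \<longrightarrow> x < y) \<and> (c = 1 \<longrightarrow> y < x) \<and> cmp q (y # t))"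
  apply (cases r)
   apply simp
  apply (rename_tac x r')
  apply (case_tac r')
  by auto

lemma cmp_append:
  "cmp p s \<Longrightarrow> cmp q t \<Longrightarrow> c \<in> {-1,0,1} \<Longrightarrow> (c = -1 \<longrightarrow> last s < hd t) \<Longrightarrow>
   (c = 1 \<longrightarrow> hd t < last s) \<Longrightarrow> cmp (p @ c # q) (s @ t)"
proof (induct p s rule: cmp.induct)
  case (1 x)
  then obtain y t' where "t = y # t'" by (cases t) (auto dest: cmp_ne)
  then show ?case using 1 by auto
next
  case (2 s p x y t)
  then show ?case by auto
qed auto

lemma cmp_split:
  "cmp (p @ c # q) r \<Longrightarrow> cmp p (take (length p + 1) r) \<and> cmp q (drop (length p + 1) r) \<and>
    c \<in> {-1,0,1} \<and> (c = -1 \<longrightarrow> last (take (length p + 1) r) < hd (drop (length p + 1) r)) \<and>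
    (c = 1 \<longrightarrow> hd (drop (length p + 1) r) < last (take (length p + 1) r))"
proof (induct p arbitrary: r)
  case Nil
  then obtain x y t where r: "r = x # y # t" by (auto simp: cmp_Cons)
  then show ?case using Nil by (auto simp: cmp_Cons)
next
  case (Cons s p)
  then obtain x y t where r: "r = x # y # t" by (auto simp: cmp_Cons)
  have "cmp (p @ c # q) (y # t)" using Cons.prems r by auto
  note IH = Cons.hyps[OF this]
  have ne: "take (length p + 1) (y # t) \<noteq> []" by simp
  show ?case using Cons.prems r IH ne by (auto simp: last_ConsR)
qed

lemma cmp_negrev: "cmp p s \<Longrightarrow> cmp (negrev p) (rev s)"
proof (induct p s rule: cmp.induct)
  case (2 c p x y t)
  then have "cmp (negrev p) (rev (y # t))" by auto
  then have "cmp (negrev p @ [- c] @ []) (rev (y # t) @ [x])"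
    using cmp_append[of "negrev p" "rev (y#t)" "[]" "[x]" "-c"] 2 by auto
  then show ?case by simp
qed auto

lemma cmp_map:
  assumes "cmp p s" "set s \<subseteq> A" "strict_mono_on A f"
  shows "cmp p (map f s)"
  using assms
proof (induct p s rule: cmp.induct)
  case (2 c p x y t)
  have "x < y \<Longrightarrow> f x < f y" using 2 by (auto simp: strict_mono_on_def)
  moreover have "y < x \<Longrightarrow> f y < f x" using 2 by (auto simp: strict_mono_on_def)
  ultimately show ?case using 2 by auto
qed auto



definition W :: "nat set \<Rightarrow> (int list \<times> nat list) set" where
  "W L = {(p, s). (\<exists>M. p = M @ [-1] \<and> ok 0 M \<and> sum_list M = 0) \<and> cmp p s \<and> distinct s \<and> set s = L}"

lemma W_card: "(p, s) \<in> W L \<Longrightarrow> length s = card L \<and> length p + 1 = card L"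
  unfolding W_def using cmp_length by (auto simp: distinct_card)

lemma W_card2: "(p, s) \<in> W L \<Longrightarrow> 2 \<le> card L"
  using W_card[of p s L] unfolding W_def by auto

lemma finite_W: assumes "finite L" shows "finite (W L)"
proof -
  have "W L \<subseteq> {p. set p \<subseteq> {-1,0,1} \<and> length p = card L - 1} \<times> {s. set s \<subseteq> L \<and> length s = card L}"
  proof
    fix x assume x: "x \<in> W L"
    obtain p s where xe: "x = (p,s)" by (cases x)
    from x xe have "cmp p s" "set s = L" by (auto simp: W_def)
    moreover from x xe have "length s = card L" "length p + 1 = card L" using W_card by auto
    ultimately show "x \<in> {p. set p \<subseteq> {-1,0,1} \<and> length p = card L - 1} \<times> {s. set s \<subseteq> L \<and> length s = card L}"
      using cmp_set xe by auto
  qed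
  moreover have "finite ({p. set p \<subseteq> {-1,0,1::int} \<and> length p = card L - 1} \<times> {s. set s \<subseteq> L \<and> length s = card L})"
    using assms by (intro finite_cartesian_product finite_lists_length_eq) auto
  ultimately show ?thesis by (rule finite_subset)
qed

lemma W_small: "card L < 2 \<Longrightarrow> W L = {}"
  using W_card2 by fastforce

lemma strict_mono_on_iff_less:
  fixes f :: "nat \<Rightarrow> nat"
  assumes "strict_mono_on A f" "x \<in> A" "y \<in> A"
  shows "f x < f y \<longleftrightarrow> x < y"
proof
  assume "f x < f y"
  show "x < y"
  proof (rule ccontr)
    assume "\<not> x < y"
    then have "y < x \<or> y = x" by auto
    then show False using assms \<open>f x < f y\<close> unfolding strict_mono_on_def by fastforce
  qed
qed (use assms in \<open>auto simp: strict_mono_on_def\<close>)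

lemma W_relabel:
  fixes f :: "nat \<Rightarrow> nat"
  assumes "strict_mono_on A f"
  shows "card (W (f ` A)) = card (W A)"
proof -
  have inj: "inj_on f A" using assms strict_mono_on_imp_inj_on by blast
  let ?g = "\<lambda>(p, s). (p, map f s)"
  have "inj_on ?g (W A)"
  proof (rule inj_onI, clarsimp)
    fix p s s' assume "(p, s) \<in> W A" "(p, s') \<in> W A" "map f s = map f s'"
    then show "s = s'" using inj unfolding W_def by (simp add: inj_on_map_eq_map)
  qed
  moreover have "?g ` W A = W (f ` A)"
  proof
    show "?g ` W A \<subseteq> W (f ` A)"
      using assms inj unfolding W_def by (auto intro: cmp_map simp: distinct_map)
  next
    show "W (f ` A) \<subseteq> ?g ` W A"
    proof clarify
      fix p t assume t: "(p, t) \<in> W (f ` A)"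
      let ?s = "map (inv_into A f) t"
      have ts: "set t = f ` A" using t unfolding W_def by auto
      have mt: "map f ?s = t" unfolding map_map by (rule map_idI) (use ts in \<open>auto simp: f_inv_into_f\<close>)
      have "set ?s = inv_into A f ` f ` A" using ts by simp
      also have "\<dots> = A" by (rule inv_into_image_cancel[OF inj]) simp
      finally have ss: "set ?s = A" .
      have "strict_mono_on (f ` A) (inv_into A f)"
      proof (rule strict_mono_onI)
        fix r s assume "r \<in> f ` A" "s \<in> f ` A" "r < s"
        then obtain a b where ab: "a \<in> A" "b \<in> A" "r = f a" "s = f b" by auto
        then have "inv_into A f r = a" "inv_into A f s = b" using inj by auto
        then show "inv_into A f r < inv_into A f s"
          using strict_mono_on_iff_less[OF assms ab(1,2)] ab \<open>r < s\<close> by simp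
      qed
      then have "cmp p ?s" using t ts unfolding W_def by (auto intro: cmp_map)
      moreover have "distinct ?s"
      proof -
        have "distinct (map f ?s)" using t mt unfolding W_def by simp
        then show ?thesis by (rule distinct_map[THEN iffD1, THEN conjunct1])
      qed
      ultimately have "(p, ?s) \<in> W A" using t ss unfolding W_def by auto
      then show "(p, t) \<in> ?g ` W A" using mt by force
    qed
  qed
  ultimately show ?thesis by (metis card_image)
qed

definition cw :: "nat \<Rightarrow> nat" where "cw n = card (W {1..n})"

lemma W_card_eq: assumes "finite L" shows "card (W L) = cw (card L)"
proof -
  define xs where "xs = sorted_list_of_set L"
  define f where "f i = xs ! (i - 1)" for i
  have len: "length xs = card L" using assms by (simp add: xs_def)
  have sw: "sorted_wrt (<) xs" by (simp add: xs_def)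
  have sm: "strict_mono_on {1..card L} f"
    unfolding strict_mono_on_def f_def using sw len
    by (auto simp: sorted_wrt_iff_nth_less)
  have "f ` {1..card L} = set xs"
  proof (intro equalityI subsetI)
    fix y assume "y \<in> f ` {1..card L}"
    then obtain i where "i \<in> {1..card L}" "y = f i" by auto
    then show "y \<in> set xs" using len by (auto simp: f_def)
  next
    fix y assume "y \<in> set xs"
    then obtain i where "i < length xs" "y = xs ! i" by (auto simp: in_set_conv_nth)
    then have "y = f (Suc i)" "Suc i \<in> {1..card L}" using len by (auto simp: f_def)
    then show "y \<in> f ` {1..card L}" by blast
  qed
  also have "\<dots> = L" using assms by (simp add: xs_def)
  finally show ?thesis using W_relabel[OF sm] by (simp add: cw_def)
qed



lemma W_mem: "(p, s) \<in> W L \<longleftrightarrow> (\<exists>M. p = M @ [-1] \<and> ok 0 M \<and> sum_list M = 0) \<and> cmp p s \<and> distinct s \<and> set s = L"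
  by (simp add: W_def)

lemma W_hd:
  assumes "(p, s) \<in> W L" "3 \<le> card L"
  shows "hd p = 0 \<or> hd p = 1"
proof -
  obtain M where M: "p = M @ [-1]" "ok 0 M" using assms(1) by (auto simp: W_mem)
  have "length p + 1 = card L" using W_card[OF assms(1)] by simp
  then have "M \<noteq> []" using M assms(2) by auto
  then obtain m M' where "M = m # M'" by (cases M) auto
  then show ?thesis using M by auto
qed

definition W0 :: "nat set \<Rightarrow> (int list \<times> nat list) set" where
  "W0 L = {x \<in> W L. hd (fst x) = 0}"
definition W1 :: "nat set \<Rightarrow> (int list \<times> nat list) set" where
  "W1 L = {x \<in> W L. hd (fst x) = 1}"

lemma W_split: "3 \<le> card L \<Longrightarrow> W L = W0 L \<union> W1 L \<and> W0 L \<inter> W1 L = {}"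
  unfolding W0_def W1_def using W_hd by fastforce

lemma W0_eq:
  "W0 L = (\<lambda>(x, (p, s)). (0 # p, x # s)) ` (SIGMA x:L. W (L - {x}))"
proof (intro equalityI subsetI)
  fix z assume z: "z \<in> W0 L"
  obtain p s where zp: "z = (p, s)" by (cases z)
  have pW: "(p, s) \<in> W L" and h0: "hd p = 0" using z zp by (auto simp: W0_def)
  obtain M where M: "p = M @ [-1]" "ok 0 M" "sum_list M = 0" using pW by (auto simp: W_mem)
  have "M \<noteq> []" using M h0 by auto
  then obtain M' where M': "M = 0 # M'" using M h0 by (cases M) auto
  have cs: "cmp p s" using pW by (auto simp: W_mem)
  then obtain x y t where st: "s = x # y # t" "cmp (M' @ [-1]) (y # t)"
    using M M' by (auto simp: cmp_Cons)
  have ds: "distinct s" "set s = L" using pW by (auto simp: W_mem)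
  have "(M' @ [-1], y # t) \<in> W (L - {x})"
    unfolding W_mem using M M' st ds by auto
  moreover have "x \<in> L" using ds st by auto
  ultimately show "z \<in> (\<lambda>(x, (p, s)). (0 # p, x # s)) ` (SIGMA x:L. W (L - {x}))"
    using zp M M' st by (auto intro!: image_eqI[where x = "(x, (M' @ [-1], y # t))"])
next
  fix z assume "z \<in> (\<lambda>(x, (p, s)). (0 # p, x # s)) ` (SIGMA x:L. W (L - {x}))"
  then obtain x p s where xps: "z = (0 # p, x # s)" "x \<in> L" "(p, s) \<in> W (L - {x})" by auto
  obtain M where M: "p = M @ [-1]" "ok 0 M" "sum_list M = 0" using xps by (auto simp: W_mem)
  have cs: "cmp p s" "distinct s" "set s = L - {x}" using xps by (auto simp: W_mem)
  obtain y t where st: "s = y # t" using cmp_ne[OF cs(1)] by (cases s) auto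
  have "cmp (0 # p) (x # s)" using cs st by (simp add: cmp_Cons)
  moreover have "0 # p = (0 # M) @ [-1]" using M(1) by simp
  moreover have "ok 0 (0 # M)" using M(2) by simp
  moreover have "sum_list (0 # M) = 0" using M(3) by simp
  ultimately have "(0 # p, x # s) \<in> W L" using cs xps(2) unfolding W_mem
    by (intro conjI exI[of _ "0 # M"]) auto
  then show "z \<in> W0 L" using xps by (simp add: W0_def)
qed

lemma W0_card:
  assumes "finite L"
  shows "card (W0 L) = (\<Sum>x\<in>L. card (W (L - {x})))"
proof -
  have "inj_on (\<lambda>(x, (p, s)). (0 # p, x # s)) (SIGMA x:L. W (L - {x}))"
    by (rule inj_onI) auto
  then have "card (W0 L) = card (SIGMA x:L. W (L - {x}))"
    unfolding W0_eq by (rule card_image)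
  also have "\<dots> = (\<Sum>x\<in>L. card (W (L - {x})))"
    using assms finite_W by (intro card_SigmaI) auto
  finally show ?thesis .
qed

definition Phi :: "(int list \<times> nat list) \<times> (int list \<times> nat list) \<Rightarrow> int list \<times> nat list" where
  "Phi q = (negrev (fst (fst q)) @ (-1) # fst (snd q), rev (snd (fst q)) @ snd (snd q))"

definition Qlt :: "nat set \<Rightarrow> ((int list \<times> nat list) \<times> (int list \<times> nat list)) set" where
  "Qlt L = {(a, b). \<exists>X. X \<subseteq> L \<and> a \<in> W X \<and> b \<in> W (L - X) \<and> hd (snd a) < hd (snd b)}"

lemma Phi_into:
  assumes "X \<subseteq> L" "(p1, s1) \<in> W X" "(p2, s2) \<in> W (L - X)" "hd s1 < hd s2"
  shows "Phi ((p1, s1), (p2, s2)) \<in> W1 L"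
proof -
  obtain M1 where M1: "p1 = M1 @ [-1]" "ok 0 M1" "sum_list M1 = 0" using assms(2) by (auto simp: W_mem)
  obtain M2 where M2: "p2 = M2 @ [-1]" "ok 0 M2" "sum_list M2 = 0" using assms(3) by (auto simp: W_mem)
  have c1: "cmp p1 s1" "distinct s1" "set s1 = X" using assms(2) by (auto simp: W_mem)
  have c2: "cmp p2 s2" "distinct s2" "set s2 = L - X" using assms(3) by (auto simp: W_mem)
  have ne1: "s1 \<noteq> []" using cmp_ne[OF c1(1)] .
  define M where "M = 1 # negrev M1 @ (-1) # M2"
  have pe: "negrev p1 @ (-1) # p2 = M @ [-1]" using M1(1) M2(1) by (simp add: M_def)
  have okn: "ok 0 (negrev M1)" using ok_negrev[OF M1(2)] M1(3) by simp
  then have "ok 1 (negrev M1)" by (rule ok_mono) simp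
  then have okM: "ok 0 M" using M2(2) M1(3) by (simp add: M_def)
  have sM: "sum_list M = 0" using M1(3) M2(3) by (simp add: M_def)
  have cm: "cmp (negrev p1 @ (-1) # p2) (rev s1 @ s2)"
  proof (rule cmp_append)
    show "cmp (negrev p1) (rev s1)" by (rule cmp_negrev[OF c1(1)])
    show "cmp p2 s2" by (rule c2(1))
    show "(-1::int) = -1 \<longrightarrow> last (rev s1) < hd s2" using assms(4) ne1 by (simp add: last_rev)
  qed auto
  have ds: "distinct (rev s1 @ s2)" using c1 c2 by auto
  have st: "set (rev s1 @ s2) = L" using c1 c2 assms(1) by auto
  have hd1: "hd (negrev p1 @ (-1) # p2) = 1" using M1(1) by simp
  have "(negrev p1 @ (-1) # p2, rev s1 @ s2) \<in> W L"
    unfolding W_mem using pe okM sM cm ds st by (intro conjI exI[of _ M]) auto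
  then show ?thesis using hd1 by (simp add: Phi_def W1_def)
qed

lemma Phi_onto:
  assumes "(p, s) \<in> W1 L"
  shows "(p, s) \<in> Phi ` Qlt L"
proof -
  have pW: "(p, s) \<in> W L" and h1: "hd p = 1" using assms by (auto simp: W1_def)
  obtain M where M: "p = M @ [-1]" "ok 0 M" "sum_list M = 0" using pW by (auto simp: W_mem)
  have cs: "cmp p s" "distinct s" "set s = L" using pW by (auto simp: W_mem)
  have "M \<noteq> []" using M h1 by auto
  then obtain M' where M': "M = 1 # M'" using M h1 by (cases M) auto
  have "set M' \<subseteq> {-1,0,1}" using ok_set[OF M(2)] M' by auto
  moreover have "sum_list M' < 0" using M(3) M' by simp
  ultimately obtain A B where AB: "M' = A @ (-1) # B" "ok 0 A" "sum_list A = 0"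
    using first_down[of M'] by auto
  have okB: "ok 0 B" using M(2) M' AB by simp
  have sB: "sum_list B = 0" using M(3) M' AB by simp
  define k where "k = length A + 2"
  have pe: "p = (1 # A) @ (-1) # (B @ [-1])" using M M' AB by simp
  have spl: "cmp (1 # A) (take k s) \<and> cmp (B @ [-1]) (drop k s) \<and>
     (last (take k s) < hd (drop k s))"
    using cmp_split[of "1 # A" "-1" "B @ [-1]" s] cs(1) pe by (simp add: k_def)
  define s1 where "s1 = rev (take k s)"
  define s2 where "s2 = drop k s"
  define p1 where "p1 = negrev A @ [-1]"
  define p2 where "p2 = B @ [-1]"
  have c1: "cmp p1 s1" using cmp_negrev[of "1 # A" "take k s"] spl by (simp add: p1_def s1_def)
  have okA: "ok 0 (negrev A)" using ok_negrev[OF AB(2)] AB(3) by simp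
  have d: "distinct (take k s @ drop k s)" using cs(2) by simp
  have ne: "take k s \<noteq> []" using cmp_ne[of "1 # A" "take k s"] spl by simp
  have W1: "(p1, s1) \<in> W (set s1)"
    unfolding W_mem using c1 okA AB(3) d by (intro conjI exI[of _ "negrev A"]) (auto simp: p1_def s1_def)
  have set2: "set s2 = L - set s1"
  proof -
    have "set (take k s) \<inter> set (drop k s) = {}" using cs(2) by (simp add: set_take_disj_set_drop_if_distinct)
    moreover have "set (take k s) \<union> set (drop k s) = L" using cs(3)
      by (simp flip: set_append)
    ultimately show ?thesis by (auto simp: s1_def s2_def)
  qed
  have W2: "(p2, s2) \<in> W (L - set s1)"
    unfolding W_mem using spl okB sB d set2 by (intro conjI exI[of _ B]) (auto simp: p2_def s2_def)
  have sub: "set s1 \<subseteq> L" using cs(3) by (auto simp: s1_def dest: in_set_takeD)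
  have lt: "hd s1 < hd s2" using spl ne by (simp add: s1_def s2_def hd_rev)
  have "((p1, s1), (p2, s2)) \<in> Qlt L"
    unfolding Qlt_def mem_Collect_eq prod.case
    by (rule exI[of _ "set s1"]) (use sub W1 W2 lt in simp)
  moreover have "Phi ((p1, s1), (p2, s2)) = (p, s)"
    using pe by (simp add: Phi_def p1_def p2_def s1_def s2_def)
  ultimately show ?thesis using image_eqI[of "(p, s)" Phi "((p1, s1), (p2, s2))" "Qlt L"] by simp
qed

lemma Phi_inj: "inj_on Phi (Qlt L)"
proof (rule inj_onI)
  fix a b assume a: "a \<in> Qlt L" and b: "b \<in> Qlt L" and e: "Phi a = Phi b"
  define p1 where "p1 = fst (fst a)"
  define s1 where "s1 = snd (fst a)"
  define p2 where "p2 = fst (snd a)"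
  define s2 where "s2 = snd (snd a)"
  define p1' where "p1' = fst (fst b)"
  define s1' where "s1' = snd (fst b)"
  define p2' where "p2' = fst (snd b)"
  define s2' where "s2' = snd (snd b)"
  have ae: "a = ((p1, s1), (p2, s2))" by (simp add: p1_def s1_def p2_def s2_def)
  have be: "b = ((p1', s1'), (p2', s2'))" by (simp add: p1'_def s1'_def p2'_def s2'_def)
  obtain X where X: "(p1, s1) \<in> W X" "(p2, s2) \<in> W (L - X)" using a ae by (auto simp: Qlt_def)
  obtain X' where X': "(p1', s1') \<in> W X'" "(p2', s2') \<in> W (L - X')" using b be by (auto simp: Qlt_def)
  obtain M1 where M1: "p1 = M1 @ [-1]" "ok 0 M1" "sum_list M1 = 0" using X(1) by (auto simp: W_mem)
  obtain M1' where M1': "p1' = M1' @ [-1]" "ok 0 M1'" "sum_list M1' = 0" using X'(1) by (auto simp: W_mem)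
  have e1: "negrev p1 @ (-1) # p2 = negrev p1' @ (-1) # p2'" and
       e2: "rev s1 @ s2 = rev s1' @ s2'" using e ae be by (auto simp: Phi_def)
  have q1: "negrev M1 @ (-1) # p2 = negrev M1' @ (-1) # p2'" using e1 M1(1) M1'(1) by simp
  have q2: "ok 0 (negrev M1)" using ok_negrev[OF M1(2)] M1(3) by simp
  have q3: "ok 0 (negrev M1')" using ok_negrev[OF M1'(2)] M1'(3) by simp
  have q4: "sum_list (negrev M1) = 0" "sum_list (negrev M1') = 0" using M1(3) M1'(3) by simp_all
  have "negrev M1 = negrev M1' \<and> p2 = p2'"
    by (rule first_down_unique[OF q2 q4(1) q3 q4(2) q1])
  then have pp: "p1 = p1'" "p2 = p2'" using M1(1) M1'(1) by (metis negrev_negrev)+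
  have "length s1 = length s1'"
    using cmp_length X(1) X'(1) pp by (auto simp: W_mem)
  then have "rev s1 = rev s1' \<and> s2 = s2'" using e2 by simp
  then show "a = b" using ae be pp by simp
qed

lemma W1_card: "card (W1 L) = card (Qlt L)"
proof -
  have "Phi ` Qlt L = W1 L"
  proof
    show "Phi ` Qlt L \<subseteq> W1 L"
    proof
      fix z assume "z \<in> Phi ` Qlt L"
      then obtain p1 s1 p2 s2 X where h: "z = Phi ((p1, s1), (p2, s2))" "X \<subseteq> L" "(p1, s1) \<in> W X"
        "(p2, s2) \<in> W (L - X)" "hd s1 < hd s2" by (auto simp: Qlt_def)
      show "z \<in> W1 L" unfolding h(1) by (rule Phi_into[OF h(2-5)])
    qed
    show "W1 L \<subseteq> Phi ` Qlt L" using Phi_onto by auto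
  qed
  then show ?thesis using card_image[OF Phi_inj[of L]] by simp
qed



definition Q :: "nat set \<Rightarrow> ((int list \<times> nat list) \<times> (int list \<times> nat list)) set" where
  "Q L = {(a, b). \<exists>X. X \<subseteq> L \<and> a \<in> W X \<and> b \<in> W (L - X)}"

definition Qgt :: "nat set \<Rightarrow> ((int list \<times> nat list) \<times> (int list \<times> nat list)) set" where
  "Qgt L = {(a, b). \<exists>X. X \<subseteq> L \<and> a \<in> W X \<and> b \<in> W (L - X) \<and> hd (snd b) < hd (snd a)}"

lemma W_hd_in: "a \<in> W X \<Longrightarrow> hd (snd a) \<in> X"
proof -
  assume a: "a \<in> W X"
  obtain p s where ae: "a = (p, s)" by (cases a)
  have "cmp p s" "set s = X" using a ae by (auto simp: W_mem)
  then show ?thesis using cmp_ne[of p s] ae by auto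
qed

lemma Q_eq: "Q L = (\<Union>X\<in>Pow L. W X \<times> W (L - X))"
  unfolding Q_def by auto

lemma W_set: "(p, s) \<in> W X \<Longrightarrow> set s = X"
  by (simp add: W_mem)

lemma finite_WW: "finite L \<Longrightarrow> X \<subseteq> L \<Longrightarrow> finite (W X \<times> W (L - X))"
  by (intro finite_cartesian_product finite_W) (auto intro: finite_subset)

lemma Q_card:
  assumes "finite L"
  shows "card (Q L) = (\<Sum>X\<in>Pow L. card (W X) * card (W (L - X)))"
proof -
  have "card (\<Union>X\<in>Pow L. W X \<times> W (L - X)) = (\<Sum>X\<in>Pow L. card (W X \<times> W (L - X)))"
  proof (rule card_UN_disjoint)
    show "finite (Pow L)" using assms by simp
    show "\<forall>X\<in>Pow L. finite (W X \<times> W (L - X))"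
      using assms finite_WW by auto
    show "\<forall>X\<in>Pow L. \<forall>Y\<in>Pow L. X \<noteq> Y \<longrightarrow> (W X \<times> W (L - X)) \<inter> (W Y \<times> W (L - Y)) = {}"
    proof (intro ballI impI)
      fix X Y :: "nat set" assume "X \<in> Pow L" "Y \<in> Pow L" "X \<noteq> Y"
      show "(W X \<times> W (L - X)) \<inter> (W Y \<times> W (L - Y)) = {}"
      proof (rule ccontr)
        assume "(W X \<times> W (L - X)) \<inter> (W Y \<times> W (L - Y)) \<noteq> {}"
        then obtain p s b where "(p, s) \<in> W X" "(p, s) \<in> W Y" by auto
        then have "X = Y" using W_set by metis
        then show False using \<open>X \<noteq> Y\<close> by simp
      qed
    qed
  qed
  then show ?thesis unfolding Q_eq by (simp add: card_cartesian_product)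
qed

lemma Q_split: "Q L = Qlt L \<union> Qgt L \<and> Qlt L \<inter> Qgt L = {}"
proof -
  have "hd (snd a) \<noteq> hd (snd b)" if "a \<in> W X" "b \<in> W (L - X)" for a b X
    using W_hd_in[OF that(1)] W_hd_in[OF that(2)] by auto
  note ne = this
  have "Q L \<subseteq> Qlt L \<union> Qgt L"
  proof
    fix z assume "z \<in> Q L"
    then obtain a b X where h: "z = (a, b)" "X \<subseteq> L" "a \<in> W X" "b \<in> W (L - X)"
      unfolding Q_def by auto
    show "z \<in> Qlt L \<union> Qgt L"
    proof (cases "hd (snd a) < hd (snd b)")
      case True
      then have "z \<in> Qlt L" unfolding Qlt_def h(1) mem_Collect_eq prod.case
        by (intro exI[of _ X]) (use h in simp)
      then show ?thesis by simp
    next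
      case False
      then have "hd (snd b) < hd (snd a)" using ne[OF h(3,4)] by simp
      then have "z \<in> Qgt L" unfolding Qgt_def h(1) mem_Collect_eq prod.case
        by (intro exI[of _ X]) (use h in simp)
      then show ?thesis by simp
    qed
  qed
  moreover have "Qlt L \<union> Qgt L \<subseteq> Q L" unfolding Q_def Qlt_def Qgt_def by blast
  moreover have "Qlt L \<inter> Qgt L = {}"
  proof (rule ccontr)
    assume "Qlt L \<inter> Qgt L \<noteq> {}"
    then obtain a b X Y where h: "a \<in> W X" "b \<in> W (L - X)" "hd (snd a) < hd (snd b)"
       "hd (snd b) < hd (snd a)" unfolding Qlt_def Qgt_def by auto
    then show False by simp
  qed
  ultimately show ?thesis by blast
qed

lemma Qgt_card: "card (Qgt L) = card (Qlt L)"
proof -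
  have "Qgt L = (\<lambda>(a, b). (b, a)) ` Qlt L"
  proof (intro equalityI subsetI)
    fix z assume "z \<in> Qgt L"
    then obtain a b X where h: "z = (a, b)" "X \<subseteq> L" "a \<in> W X" "b \<in> W (L - X)" "hd (snd b) < hd (snd a)"
      unfolding Qgt_def by auto
    have "L - (L - X) = X" using h(2) by auto
    then have "(b, a) \<in> Qlt L" unfolding Qlt_def mem_Collect_eq prod.case
      by (intro exI[of _ "L - X"]) (use h in simp)
    then show "z \<in> (\<lambda>(a, b). (b, a)) ` Qlt L" using h(1) by (auto intro: image_eqI[where x = "(b, a)"])
  next
    fix z assume "z \<in> (\<lambda>(a, b). (b, a)) ` Qlt L"
    then obtain a b X where h: "z = (b, a)" "X \<subseteq> L" "a \<in> W X" "b \<in> W (L - X)" "hd (snd a) < hd (snd b)"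
      unfolding Qlt_def by auto
    have "L - (L - X) = X" using h(2) by auto
    then show "z \<in> Qgt L" unfolding Qgt_def h(1) mem_Collect_eq prod.case
      by (intro exI[of _ "L - X"]) (use h in simp)
  qed
  moreover have "inj_on (\<lambda>(a, b). (b, a)) (Qlt L)" by (rule inj_onI) auto
  ultimately show ?thesis by (simp add: card_image)
qed

lemma rec_main:
  assumes "finite L" "3 \<le> card L"
  shows "2 * card (W L) = 2 * card L * cw (card L - 1) + (\<Sum>X\<in>Pow L. cw (card X) * cw (card L - card X))"
proof -
  have fW: "finite (W0 L)" "finite (W1 L)" using finite_W[OF assms(1)] by (auto simp: W0_def W1_def)
  have "card (W L) = card (W0 L) + card (W1 L)"
    using W_split[OF assms(2)] fW card_Un_disjoint by metis
  moreover have "card (W0 L) = card L * cw (card L - 1)"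
  proof -
    have "card (W0 L) = (\<Sum>x\<in>L. card (W (L - {x})))" by (rule W0_card[OF assms(1)])
    also have "\<dots> = (\<Sum>x\<in>L. cw (card L - 1))"
      using assms(1) by (intro sum.cong refl) (simp add: W_card_eq)
    finally show ?thesis by simp
  qed
  moreover have "2 * card (W1 L) = (\<Sum>X\<in>Pow L. cw (card X) * cw (card L - card X))"
  proof -
    have fQ: "finite (Q L)" using assms(1) finite_WW by (auto simp: Q_eq)
    have "card (Q L) = card (Qlt L) + card (Qgt L)"
      using Q_split[of L] fQ by (metis card_Un_disjoint finite_Un)
    then have "2 * card (W1 L) = card (Q L)" using Qgt_card W1_card by simp
    also have "\<dots> = (\<Sum>X\<in>Pow L. card (W X) * card (W (L - X)))" by (rule Q_card[OF assms(1)])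
    also have "\<dots> = (\<Sum>X\<in>Pow L. cw (card X) * cw (card L - card X))"
    proof (intro sum.cong refl)
      fix X assume "X \<in> Pow L"
      then have "X \<subseteq> L" "finite X" using assms(1) finite_subset by auto
      then show "card (W X) * card (W (L - X)) = cw (card X) * cw (card L - card X)"
        using assms(1) by (simp add: W_card_eq card_Diff_subset)
    qed
    finally show ?thesis .
  qed
  ultimately show ?thesis by (simp add: algebra_simps)
qed

lemma sum_Pow_card:
  assumes "finite L"
  shows "(\<Sum>X\<in>Pow L. g (card X)) = (\<Sum>k=0..card L. (card L choose k) * g k)"
proof -
  have "(\<Sum>X\<in>Pow L. g (card X)) = (\<Sum>k\<in>{0..card L}. sum (\<lambda>X. g (card X)) {X \<in> Pow L. card X = k})"
    using assms by (intro sum.group[symmetric]) (auto intro: card_mono)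
  also have "\<dots> = (\<Sum>k=0..card L. (card L choose k) * g k)"
  proof (intro sum.cong refl)
    fix k
    have "sum (\<lambda>X. g (card X)) {X \<in> Pow L. card X = k} = sum (\<lambda>X. g k) {X \<in> Pow L. card X = k}"
      by (intro sum.cong) auto
    also have "\<dots> = card {X \<in> Pow L. card X = k} * g k" by simp
    also have "{X \<in> Pow L. card X = k} = {X. X \<subseteq> L \<and> card X = k}" by auto
    finally show "sum (\<lambda>X. g (card X)) {X \<in> Pow L. card X = k} = (card L choose k) * g k"
      using n_subsets[OF assms] by simp
  qed
  finally show ?thesis .
qed

lemma cw_rec:
  assumes "3 \<le> n"
  shows "2 * cw n = 2 * n * cw (n - 1) + (\<Sum>k=0..n. (n choose k) * (cw k * cw (n - k)))"
proof -
  have "2 * cw n = 2 * card (W {1..n})" by (simp add: cw_def)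
  also have "\<dots> = 2 * n * cw (n - 1) + (\<Sum>X\<in>Pow {1..n}. cw (card X) * cw (n - card X))"
    using rec_main[of "{1..n}"] assms by simp
  also have "(\<Sum>X\<in>Pow {1..n}. cw (card X) * cw (n - card X)) = (\<Sum>k=0..n. (n choose k) * (cw k * cw (n - k)))"
    using sum_Pow_card[of "{1..n}" "\<lambda>k. cw k * cw (n - k)"] by simp
  finally show ?thesis .
qed

lemma cw_small: "n < 2 \<Longrightarrow> cw n = 0"
  unfolding cw_def using W_small[of "{1..n}"] by simp



lemma cmp_Nil: "cmp [] s \<longleftrightarrow> length s = 1"
  apply (cases s)
   apply simp
  apply (rename_tac x t)
  apply (case_tac t)
  by auto

lemma cmp_iff:
  "cmp p s \<longleftrightarrow> length s = length p + 1 \<and> set p \<subseteq> {-1,0,1} \<and>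
     (\<forall>i<length p. (p ! i = -1 \<longrightarrow> s ! i < s ! (i + 1)) \<and> (p ! i = 1 \<longrightarrow> s ! (i + 1) < s ! i))"
proof (induct p arbitrary: s)
  case Nil then show ?case by (simp add: cmp_Nil)
next
  case (Cons c p)
  show ?case
  proof
    assume h: "cmp (c # p) s"
    then obtain x y t where st: "s = x # y # t" "c \<in> {-1,0,1}" "c = -1 \<longrightarrow> x < y" "c = 1 \<longrightarrow> y < x"
      "cmp p (y # t)" by (auto simp: cmp_Cons)
    have ih: "length (y # t) = length p + 1" "set p \<subseteq> {-1,0,1}"
      "\<forall>i<length p. (p ! i = -1 \<longrightarrow> (y#t) ! i < (y#t) ! (i + 1)) \<and> (p ! i = 1 \<longrightarrow> (y#t) ! (i + 1) < (y#t) ! i)"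
      using Cons.hyps st(5) by blast+
    show "length s = length (c # p) + 1 \<and> set (c # p) \<subseteq> {-1,0,1} \<and>
     (\<forall>i<length (c # p). ((c # p) ! i = -1 \<longrightarrow> s ! i < s ! (i + 1)) \<and> ((c # p) ! i = 1 \<longrightarrow> s ! (i + 1) < s ! i))"
    proof (intro conjI allI impI)
      show "length s = length (c # p) + 1" using st ih by simp
      show "set (c # p) \<subseteq> {-1,0,1}" using st ih by simp
    next
      fix i assume "i < length (c # p)" "(c # p) ! i = -1"
      then show "s ! i < s ! (i + 1)" using st ih by (cases i) auto
    next
      fix i assume "i < length (c # p)" "(c # p) ! i = 1"
      then show "s ! (i + 1) < s ! i" using st ih by (cases i) auto
    qed
  next
    assume h: "length s = length (c # p) + 1 \<and> set (c # p) \<subseteq> {-1,0,1} \<and>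
     (\<forall>i<length (c # p). ((c # p) ! i = -1 \<longrightarrow> s ! i < s ! (i + 1)) \<and> ((c # p) ! i = 1 \<longrightarrow> s ! (i + 1) < s ! i))"
    then obtain x y t where st: "s = x # y # t"
      by (cases s; cases "tl s") auto
    have h0: "c \<in> {-1,0,1}" "c = -1 \<longrightarrow> x < y" "c = 1 \<longrightarrow> y < x"
      using h st by (auto dest: spec[of _ 0])
    have "cmp p (y # t)"
    proof (subst Cons.hyps, intro conjI allI impI)
      show "length (y # t) = length p + 1" using h st by simp
      show "set p \<subseteq> {-1,0,1}" using h by simp
    next
      fix i assume "i < length p" "p ! i = -1"
      then show "(y # t) ! i < (y # t) ! (i + 1)" using h st spec[OF conjunct2[OF conjunct2[OF h]], of "Suc i"] by simp
    next
      fix i assume "i < length p" "p ! i = 1"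
      then show "(y # t) ! (i + 1) < (y # t) ! i" using h st spec[OF conjunct2[OF conjunct2[OF h]], of "Suc i"] by simp
    qed
    then show "cmp (c # p) s" using st h0 by (simp add: cmp_Cons)
  qed
qed

lemma ok_iff:
  "ok h X \<longleftrightarrow> set X \<subseteq> {-1,0,1} \<and> (\<forall>j. 1 \<le> j \<longrightarrow> j \<le> length X \<longrightarrow> 0 \<le> h + sum_list (take j X))"
proof (induct X arbitrary: h)
  case Nil then show ?case by simp
next
  case (Cons s X)
  show ?case
  proof
    assume "ok h (s # X)"
    then have a: "s \<in> {-1,0,1}" "0 \<le> h + s" "set X \<subseteq> {-1,0,1}"
      "\<forall>j. 1 \<le> j \<longrightarrow> j \<le> length X \<longrightarrow> 0 \<le> h + s + sum_list (take j X)"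
      using Cons.hyps[of "h + s"] by auto
    show "set (s # X) \<subseteq> {-1,0,1} \<and> (\<forall>j. 1 \<le> j \<longrightarrow> j \<le> length (s # X) \<longrightarrow> 0 \<le> h + sum_list (take j (s # X)))"
    proof (intro conjI allI impI)
      show "set (s # X) \<subseteq> {-1,0,1}" using a by simp
      fix j assume j: "1 \<le> j" "j \<le> length (s # X)"
      show "0 \<le> h + sum_list (take j (s # X))"
      proof (cases "j = 1")
        case True then show ?thesis using a by simp
      next
        case False
        then obtain j' where "j = Suc j'" "1 \<le> j'" "j' \<le> length X" using j by (cases j) auto
        then show ?thesis using a by (simp add: algebra_simps)
      qed
    qed
  next
    assume b: "set (s # X) \<subseteq> {-1,0,1} \<and> (\<forall>j. 1 \<le> j \<longrightarrow> j \<le> length (s # X) \<longrightarrow> 0 \<le> h + sum_list (take j (s # X)))"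
    have b1: "0 \<le> h + s" using spec[OF conjunct2[OF b], of 1] by simp
    have b2: "\<forall>j. 1 \<le> j \<longrightarrow> j \<le> length X \<longrightarrow> 0 \<le> h + s + sum_list (take j X)"
    proof (intro allI impI)
      fix j assume "1 \<le> j" "j \<le> length X"
      then show "0 \<le> h + s + sum_list (take j X)" using spec[OF conjunct2[OF b], of "Suc j"] by (simp add: algebra_simps)
    qed
    have "ok (h + s) X" using Cons.hyps[of "h + s"] b b2 by simp
    then show "ok h (s # X)" using b b1 by simp
  qed
qed

lemma motzkin_iff:
  assumes "length p = n - 1" "2 \<le> n" "set p \<subseteq> {-1,0,1}"
  shows "motzkin_word n p \<longleftrightarrow> (\<exists>M. p = M @ [-1] \<and> ok 0 M \<and> sum_list M = 0)"
proof -
  have "p \<noteq> []" using assms by auto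
  then obtain M l where pe: "p = M @ [l]" by (metis rev_exhaust)
  have lM: "length M = n - 2" using assms(1) pe by simp
  have l: "l \<in> {-1,0,1}" "set M \<subseteq> {-1,0,1}" using assms(3) pe by auto
  have pre: "(\<forall>j\<in>{1..n-2}. 0 \<le> sum_list (take j p)) \<longleftrightarrow> ok 0 M"
  proof -
    have "\<forall>j\<in>{1..n-2}. take j p = take j M" using pe lM by auto
    then have "(\<forall>j\<in>{1..n-2}. 0 \<le> sum_list (take j p)) \<longleftrightarrow> (\<forall>j. 1 \<le> j \<longrightarrow> j \<le> length M \<longrightarrow> 0 \<le> 0 + sum_list (take j M))"
      using lM by auto
    then show ?thesis using ok_iff[of 0 M] l by simp
  qed
  show ?thesis
  proof
    assume "motzkin_word n p"
    then have m: "ok 0 M" "sum_list M + l = -1" using pre pe unfolding motzkin_word_def by auto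
    have "0 \<le> sum_list M"
    proof (cases "M = []")
      case True then show ?thesis by simp
    next
      case False
      then have "1 \<le> length M" by (cases M) auto
      then show ?thesis using ok_iff[of 0 M] m(1) by fastforce
    qed
    then have "l = -1" "sum_list M = 0" using m l by auto
    then show "\<exists>M. p = M @ [-1] \<and> ok 0 M \<and> sum_list M = 0" using pe m by auto
  next
    assume "\<exists>M. p = M @ [-1] \<and> ok 0 M \<and> sum_list M = 0"
    then obtain M' where M': "p = M' @ [-1]" "ok 0 M'" "sum_list M' = 0" by blast
    then have "M' = M" "l = -1" using pe by auto
    then show "motzkin_word n p" using pre M' pe unfolding motzkin_word_def by simp
  qed
qed

lemma W_defs_eq:
  assumes "2 \<le> n"
  shows "{(p, s). wl_motzkin_path n p s} = W {1..n}"
proof (intro equalityI subsetI)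
  fix z assume "z \<in> {(p, s). wl_motzkin_path n p s}"
  then obtain p s where z: "z = (p, s)" "wl_motzkin_path n p s" by auto
  then have w: "length p = n - 1" "set p \<subseteq> {-1,0,1}" "length s = n" "distinct s" "set s = {1..n}"
    "\<forall>i<n - 1. p ! i = -1 \<longrightarrow> s ! i < s ! (i + 1)" "\<forall>i<n - 1. p ! i = 1 \<longrightarrow> s ! i > s ! (i + 1)"
    "motzkin_word n p"
    unfolding wl_motzkin_path_def well_labelled_path_def by auto
  have "cmp p s" unfolding cmp_iff using w assms by auto
  moreover have "\<exists>M. p = M @ [-1] \<and> ok 0 M \<and> sum_list M = 0" using motzkin_iff w assms by blast
  ultimately show "z \<in> W {1..n}" using z w by (simp add: W_mem)
next
  fix z assume "z \<in> W {1..n}"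
  then obtain p s where z: "z = (p, s)" "(p, s) \<in> W {1..n}" by (cases z) auto
  have c: "cmp p s" "distinct s" "set s = {1..n}" "\<exists>M. p = M @ [-1] \<and> ok 0 M \<and> sum_list M = 0"
    using z by (auto simp: W_mem)
  have l: "length s = n" "length p + 1 = n" using W_card[OF z(2)] by auto
  have ci: "length s = length p + 1" "set p \<subseteq> {-1,0,1}"
     "\<forall>i<length p. (p ! i = -1 \<longrightarrow> s ! i < s ! (i + 1)) \<and> (p ! i = 1 \<longrightarrow> s ! (i + 1) < s ! i)"
    using c(1) unfolding cmp_iff by auto
  have "motzkin_word n p" using motzkin_iff[of p n] l ci(2) c(4) assms by simp
  then have "wl_motzkin_path n p s"
    unfolding wl_motzkin_path_def well_labelled_path_def using l ci c by auto
  then show "z \<in> {(p, s). wl_motzkin_path n p s}" using z by simp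
qed

lemma num_cw: "num_wl_motzkin n = cw n"
proof (cases "n < 2")
  case True then show ?thesis by (simp add: num_wl_motzkin_def cw_small)
next
  case False then show ?thesis by (simp add: num_wl_motzkin_def W_defs_eq cw_def)
qed

lemma W2: "W {1..2} = {([-1], [1, 2])}"
proof (intro equalityI subsetI)
  fix z assume "z \<in> W {1..2}"
  then obtain p s where z: "z = (p, s)" "(p, s) \<in> W {1..2}" by (cases z) auto
  obtain M where M: "p = M @ [-1]" using z by (auto simp: W_mem)
  have l: "length s = 2" "length p + 1 = 2" using W_card[OF z(2)] by auto
  then have p: "p = [-1]" using M by simp
  have c: "cmp p s" "set s = {1..2}" using z by (auto simp: W_mem)
  have "length s = Suc (Suc 0)" using l(1) by simp
  then obtain x y where s: "s = [x, y]" by (auto simp: length_Suc_conv)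
  have "x < y" using c(1) p s by simp
  moreover have xs: "x \<in> set s" "y \<in> set s" using s by simp_all
  moreover have "1 \<le> x" using xs(1) c(2) by simp
  moreover have "y \<le> 2" using xs(2) c(2) by simp
  ultimately have "x = 1" "y = 2" by auto
  then show "z \<in> {([-1], [1, 2])}" using z p s by simp
next
  fix z assume "z \<in> {([-1::int], [1::nat, 2])}"
  moreover have "([-1::int], [1::nat, 2]) \<in> W {1..2}"
    unfolding W_mem by (intro conjI exI[of _ "[]"]) auto
  ultimately show "z \<in> W {1..2}" by simp
qed

lemma cw2: "cw 2 = 1"
  unfolding cw_def using W2 by simp



lemma coeff_eq:
  fixes n :: nat
  defines "a \<equiv> \<lambda>k. real (cw k) / fact k"
  shows "a n = (if n = 2 then 1/2 else 0) + (if n = 0 then 0 else a (n - 1)) +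
           (\<Sum>i=0..n. a i * a (n - i)) / 2"
proof (cases "n \<le> 2")
  case True
  have a0: "a 0 = 0" "a 1 = 0" "a 2 = 1/2" using cw_small cw2 by (simp_all add: a_def)
  have "n = 0 \<or> n = 1 \<or> n = 2" using True by auto
  then show ?thesis
  proof (elim disjE)
    assume "n = 0" then show ?thesis using a0 by simp
  next
    assume "n = 1" then show ?thesis using a0 by simp
  next
    assume n2: "n = 2"
    have "(\<Sum>i=0..n. a i * a (n - i)) = a 0 * a 2 + a 1 * a 1 + a 2 * a 0"
      using n2 by (simp add: numeral_2_eq_2)
    then show ?thesis using a0 n2 by simp
  qed
next
  case False
  then have n3: "3 \<le> n" by simp
  have rec: "2 * real (cw n) = 2 * real n * real (cw (n - 1)) + (\<Sum>k=0..n. real (n choose k) * (real (cw k) * real (cw (n - k))))"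
    using arg_cong[OF cw_rec[OF n3], of real] by simp
  have s: "(\<Sum>i=0..n. a i * a (n - i)) = (\<Sum>k=0..n. real (n choose k) * (real (cw k) * real (cw (n - k)))) / fact n"
    unfolding sum_divide_distrib
  proof (intro sum.cong refl)
    fix k assume "k \<in> {0..n}"
    then have "k \<le> n" by simp
    then have "real (n choose k) = fact n / (fact k * fact (n - k))" by (rule binomial_fact)
    then show "a k * a (n - k) = real (n choose k) * (real (cw k) * real (cw (n - k))) / fact n"
      by (simp add: a_def field_simps)
  qed
  have fn: "(fact n :: real) = real n * fact (n - 1)"
    using n3 by (metis Suc_diff_1 fact_Suc le_trans not_less_eq_eq numeral_3_eq_3 zero_less_Suc of_nat_Suc le_simps(3) not0_implies_Suc)
  have an1: "a (n - 1) = real n * real (cw (n - 1)) / fact n"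
    using fn n3 by (simp add: a_def)
  have "a n = real (cw n) / fact n" by (simp add: a_def)
  also have "\<dots> = (2 * real n * real (cw (n - 1)) + (\<Sum>k=0..n. real (n choose k) * (real (cw k) * real (cw (n - k))))) / (2 * fact n)"
    unfolding rec[symmetric] by simp
  also have "\<dots> = a (n - 1) + (\<Sum>i=0..n. a i * a (n - i)) / 2"
    unfolding an1 s by (simp add: field_simps)
  finally show ?thesis using n3 by simp
qed

theorem corollary1:
  shows "A_egf = fps_X ^ 2 / 2 + fps_X * A_egf + A_egf ^ 2 / 2"
proof (rule fps_ext)
  fix n
  define a where "a = (\<lambda>k. real (cw k) / fact k)"
  have A: "A_egf = Abs_fps a" unfolding A_egf_def a_def by (simp add: num_cw)
  have two: "(2 :: real fps) = fps_const 2" by (simp add: fps_numeral_fps_const)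
  have "fps_nth (fps_X ^ 2 / 2 + fps_X * A_egf + A_egf ^ 2 / 2) n =
        (if n = 2 then 1/2 else 0) + (if n = 0 then 0 else a (n - 1)) + (\<Sum>i=0..n. a i * a (n - i)) / 2"
  proof -
    have h1: "fps_nth (fps_X ^ 2 / 2 :: real fps) n = (if n = 2 then 1/2 else 0)"
      unfolding two divide_fps_const by (simp add: fps_mult_left_const_nth fps_X_power_nth)
    have h2: "fps_nth (fps_X * Abs_fps a) n = (if n = 0 then 0 else a (n - 1))"
      by (simp add: fps_X_mult_nth)
    have h3: "fps_nth (Abs_fps a ^ 2 / 2) n = (\<Sum>i=0..n. a i * a (n - i)) / 2"
    proof -
      have "fps_nth (Abs_fps a * Abs_fps a) n = (\<Sum>i=0..n. a i * a (n - i))"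
        by (simp add: fps_mult_nth)
      then show ?thesis unfolding two divide_fps_const fps_mult_left_const_nth power2_eq_square
        by simp
    qed
    show ?thesis unfolding A fps_add_nth h1 h2 h3 ..
  qed
  also have "\<dots> = a n" using coeff_eq[of n] by (simp add: a_def)
  finally show "fps_nth A_egf n = fps_nth (fps_X ^ 2 / 2 + fps_X * A_egf + A_egf ^ 2 / 2) n"
    by (simp add: A)
qed


end
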